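(* Let $p_c,q_c\in\mathbb{R}_{\ge0}$, $M=\begin{bmatrix} p_c & q_c\\ -q_c & p_c\end{bmatrix}$, $v_{\min}>0$, and consider the constant power load (CPL) whose current response to a voltage $v$ is $i=\dfrac{1}{\|v\|_2^2}Mv$, with $\|v\|_2\ge v_{\min}$. Write $v=v_0+v_\delta$, where $v_0$ is an admissible operating voltage with $V_0=\|v_0\|_2\ge v_{\min}$ (in particular $V_0>0$), and define the ripple ratio $\rho=\|v_\delta\|_\infty/V_0$, assumed to satisfy $2\rho+\rho^2<1$. Define the frequency-preserving (linear) part of the current $i_{\mathrm{lin}}=\frac{1}{V_0^2}M(v_0+v_\delta)$ and the nonlinear remainder $i_{\mathrm{har}}=i-i_{\mathrm{lin}}$. Then $$\|i_{\mathrm{har}}\|_2\le \frac{\sigma_{\max}(M)}{v_{\min}^2}\,\frac{(\rho+1)(\rho+2)}{1-(2\rho+\rho^2)}\,\|v_\delta\|_2,$$ and hence the CPL is $\varepsilon(\rho)$-frequency-preserving with $\varepsilon(\rho)=\dfrac{\sigma_{\max}(M)}{v_{\min}^2}\,\dfrac{(\rho+1)(\rho+2)}{1-(2\rho+\rho^2)}$.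
   Context: $\sigma_{\max}(M)$ is the largest singular value of $M$; $\|\cdot\|_2$ denotes the 2-norm (called $\mathcal{L}_2$-norm in the paper) and $\|\cdot\|_\infty$ the sup norm. "The CPL is $\varepsilon$-frequency-preserving" means that its current decomposes as the linear, frequency-preserving part $i_{\mathrm{lin}}$ plus a nonlinear remainder $i_{\mathrm{har}}$ satisfying $\|i_{\mathrm{har}}\|_2\le\varepsilon\|v_\delta\|_2$. *)

theory Defs
  imports "HOL-Analysis.Analysis"
begin

text \<open>Signals are functions of time t :: real with values in the alpha-beta plane real^2.\<close>

definition cpl_M :: "real \<Rightarrow> real \<Rightarrow> real^2^2" where
  "cpl_M pc qc = vector [vector [pc, qc], vector [- qc, pc]]"

definition sigma_max :: "real^2^2 \<Rightarrow> real" where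
  "sigma_max M = onorm (\<lambda>x. M *v x)"

definition cpl_current :: "real^2^2 \<Rightarrow> (real \<Rightarrow> real^2) \<Rightarrow> (real \<Rightarrow> real^2)" where
  "cpl_current M v = (\<lambda>t. (1 / (norm (v t))\<^sup>2) *\<^sub>R (M *v v t))"

definition L2_norm :: "(real \<Rightarrow> real^2) \<Rightarrow> real" where
  "L2_norm f = sqrt (integral\<^sup>L lborel (\<lambda>t. (norm (f t))\<^sup>2))"

definition sup_norm :: "(real \<Rightarrow> real^2) \<Rightarrow> real" where
  "sup_norm f = (SUP t. norm (f t))"

end

theory Submission
  imports Defs
begin

lemma pw_bound:
  fixes s n V0 a vmin rho :: real
  assumes s: "s \<ge> 0" and vm: "vmin > 0" and V: "V0 \<ge> vmin"
    and n1: "n \<ge> vmin" and d1: "\<bar>n - V0\<bar> \<le> a" and a0: "a \<ge> 0"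
    and ar: "a \<le> rho * V0" and D: "2 * rho + rho\<^sup>2 < 1" and r0: "rho \<ge> 0"
    and x: "x \<le> \<bar>1 / n\<^sup>2 - 1 / V0\<^sup>2\<bar> * (s * n)"
  shows "x \<le> s / vmin\<^sup>2 * ((rho + 1) * (rho + 2) / (1 - (2 * rho + rho\<^sup>2))) * a"
proof -
  have V0: "V0 > 0" using vm V by linarith
  have n0: "n > 0" using vm n1 by linarith
  have e: "\<bar>1 / n\<^sup>2 - 1 / V0\<^sup>2\<bar> = \<bar>n - V0\<bar> * (n + V0) / (n\<^sup>2 * V0\<^sup>2)"
  proof -
    have "1 / n\<^sup>2 - 1 / V0\<^sup>2 = (V0 - n) * (n + V0) / (n\<^sup>2 * V0\<^sup>2)"
      using V0 n0 by (simp add: field_simps power2_eq_square)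
    then show ?thesis using V0 n0 by (simp add: abs_mult abs_minus_commute)
  qed
  have p1: "\<bar>n - V0\<bar> * (n + V0) \<le> a * (V0 * (rho + 2))"
    apply (rule mult_mono) using d1 a0 n0 V0 ar by (auto simp: abs_le_iff algebra_simps)
  have p2: "n \<le> V0 * (rho + 1)" using d1 ar by (auto simp: abs_le_iff algebra_simps)
  have "\<bar>n - V0\<bar> * (n + V0) * n \<le> a * (V0 * (rho + 2)) * (V0 * (rho + 1))"
    apply (rule mult_mono[OF p1 p2]) using a0 V0 r0 n0 by auto
  then have k: "\<bar>n - V0\<bar> * (n + V0) * n \<le> a * (rho + 1) * (rho + 2) * V0\<^sup>2"
    by (simp add: algebra_simps power2_eq_square)
  have "x \<le> s * (\<bar>n - V0\<bar> * (n + V0) * n) / (n\<^sup>2 * V0\<^sup>2)"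
    using x e by (simp add: field_simps)
  also have "\<dots> \<le> s * (a * (rho + 1) * (rho + 2) * V0\<^sup>2) / (n\<^sup>2 * V0\<^sup>2)"
    by (intro divide_right_mono mult_left_mono k s) simp
  also have "\<dots> = s * a * (rho + 1) * (rho + 2) / n\<^sup>2" using V0 n0 by (simp add: field_simps)
  also have "\<dots> \<le> s * a * (rho + 1) * (rho + 2) / vmin\<^sup>2"
    apply (rule divide_left_mono) using s a0 r0 n1 vm by (auto intro!: power_mono)
  also have "\<dots> \<le> s * a * (rho + 1) * (rho + 2) / vmin\<^sup>2 / (1 - (2 * rho + rho\<^sup>2))"
  proof -
    have "0 < 1 - (2 * rho + rho\<^sup>2)" "1 - (2 * rho + rho\<^sup>2) \<le> 1" using D r0 zero_le_power2[of rho] by linarith+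
    moreover have "0 \<le> s * a * (rho + 1) * (rho + 2) / vmin\<^sup>2" using s a0 r0 by auto
    ultimately show ?thesis using divide_left_mono[of "1 - (2 * rho + rho\<^sup>2)" 1 "s * a * (rho + 1) * (rho + 2) / vmin\<^sup>2"] by simp
  qed
  also have "\<dots> = s / vmin\<^sup>2 * ((rho + 1) * (rho + 2) / (1 - (2 * rho + rho\<^sup>2))) * a"
    by (simp add: field_simps)
  finally show ?thesis .
qed

theorem lemma2:
  fixes pc qc vmin V0 :: real and v0 v\<delta> :: "real \<Rightarrow> real^2"
  assumes "pc \<ge> 0" and "qc \<ge> 0" and "vmin > 0"
    and "\<And>t. norm (v0 t + v\<delta> t) \<ge> vmin"
    and "\<And>t. norm (v0 t) = V0" and "V0 \<ge> vmin"
    and "v0 \<in> borel_measurable lborel" and "v\<delta> \<in> borel_measurable lborel"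
    and "bounded (range v\<delta>)"
    and "integrable lborel (\<lambda>t. (norm (v\<delta> t))\<^sup>2)"
    and "2 * (sup_norm v\<delta> / V0) + (sup_norm v\<delta> / V0)\<^sup>2 < 1"
  shows "let M = cpl_M pc qc;
             \<rho> = sup_norm v\<delta> / V0;
             i = cpl_current M (\<lambda>t. v0 t + v\<delta> t);
             i_lin = (\<lambda>t. (1 / V0\<^sup>2) *\<^sub>R (M *v (v0 t + v\<delta> t)));
             i_har = (\<lambda>t. i t - i_lin t)
         in L2_norm i_har \<le> sigma_max M / vmin\<^sup>2 * ((\<rho> + 1) * (\<rho> + 2) / (1 - (2 * \<rho> + \<rho>\<^sup>2)))
                              * L2_norm v\<delta>"
proof -
  define M where "M = cpl_M pc qc"
  define rho where "rho = sup_norm v\<delta> / V0"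
  define s where "s = sigma_max M"
  define C where "C = s / vmin\<^sup>2 * ((rho + 1) * (rho + 2) / (1 - (2 * rho + rho\<^sup>2)))"
  define h where "h = (\<lambda>t. cpl_current M (\<lambda>t. v0 t + v\<delta> t) t - (1 / V0\<^sup>2) *\<^sub>R (M *v (v0 t + v\<delta> t)))"
  have V0: "V0 > 0" using assms(3,6) by linarith
  have s0: "s \<ge> 0" unfolding s_def sigma_max_def by (rule onorm_pos_le) simp
  have sM: "norm (M *v x) \<le> s * norm x" for x
    unfolding s_def sigma_max_def by (rule onorm) simp
  obtain B where B: "\<And>t. norm (v\<delta> t) \<le> B" using assms(9) unfolding bounded_iff by auto
  have bdd: "bdd_above (range (\<lambda>t. norm (v\<delta> t)))" by (meson B bdd_aboveI2)
  have sup: "norm (v\<delta> t) \<le> sup_norm v\<delta>" for t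
    unfolding sup_norm_def by (rule cSUP_upper[OF _ bdd]) simp
  have r0: "rho \<ge> 0" unfolding rho_def using sup[of 0] V0 by (meson divide_nonneg_pos norm_ge_zero order_trans)
  have ar: "norm (v\<delta> t) \<le> rho * V0" for t using sup[of t] V0 by (simp add: rho_def)
  have C0: "C \<ge> 0"
  proof -
    have "0 < 1 - (2 * rho + rho\<^sup>2)" using assms(11) by (simp add: rho_def)
    then show ?thesis unfolding C_def using s0 r0 by auto
  qed
  have pw: "norm (h t) \<le> C * norm (v\<delta> t)" for t
  proof -
    let ?w = "v0 t + v\<delta> t"
    have e: "h t = (1 / (norm ?w)\<^sup>2 - 1 / V0\<^sup>2) *\<^sub>R (M *v ?w)"
      unfolding h_def cpl_current_def by (simp add: scaleR_diff_left)
    have x: "norm (h t) \<le> \<bar>1 / (norm ?w)\<^sup>2 - 1 / V0\<^sup>2\<bar> * (s * norm ?w)"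
      unfolding e by (simp add: mult_left_mono sM)
    have d1: "\<bar>norm ?w - V0\<bar> \<le> norm (v\<delta> t)"
      using norm_triangle_ineq[of "v0 t" "v\<delta> t"] norm_triangle_ineq4[of "?w" "v\<delta> t"] assms(5)[of t]
      by (simp add: abs_le_iff)
    show ?thesis unfolding C_def
      by (rule pw_bound[OF s0 assms(3) assms(6) assms(4) d1 norm_ge_zero ar _ r0 x])
         (use assms(11) in \<open>simp add: rho_def\<close>)
  qed
  have "integral\<^sup>L lborel (\<lambda>t. (norm (h t))\<^sup>2) \<le> integral\<^sup>L lborel (\<lambda>t. C\<^sup>2 * (norm (v\<delta> t))\<^sup>2)"
  proof (rule integral_mono')
    show "integrable lborel (\<lambda>t. C\<^sup>2 * (norm (v\<delta> t))\<^sup>2)" using assms(10) by simp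
    fix t
    show "(norm (h t))\<^sup>2 \<le> C\<^sup>2 * (norm (v\<delta> t))\<^sup>2"
      using pw[of t] by (metis norm_ge_zero power_mono power_mult_distrib)
    show "0 \<le> C\<^sup>2 * (norm (v\<delta> t))\<^sup>2" by simp
  qed
  then have "L2_norm h \<le> sqrt (C\<^sup>2 * integral\<^sup>L lborel (\<lambda>t. (norm (v\<delta> t))\<^sup>2))"
    unfolding L2_norm_def by simp
  also have "\<dots> = C * L2_norm v\<delta>" unfolding L2_norm_def using C0 by (simp add: real_sqrt_mult)
  finally show ?thesis unfolding Let_def M_def[symmetric] rho_def[symmetric] s_def[symmetric]
      C_def[symmetric] h_def[symmetric] .
qed

end
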